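(* Let $(R,+,\times)$ be a finite ring with identity $1$, of order $n$, and let $G$ be a subgroup of the multiplicative group $R^\times$ of invertible elements of $R$, with $k=|G|$. Let $f_G$ be the coset index function induced by $G$. If $$(G-1)\setminus\{0\}\subset R^\times,\qquad\text{where } G-1=\{g-1\mid g\in G\},$$ then $f_G$ is an $\left(n,\frac{n-1}{k}+1,k-1\right)$ zero-difference balanced function from $(R,+)$ to $\mathbb{Z}_m$, where $m=\frac{n-1}{k}+1$.
   Context: For a subgroup $G$ of $R^\times$ and $r\in R$, the coset $rG=\{rg\mid g\in G\}$; the sets $rG$ ($r\in R$) form a partition $D_G$ of $R$. The coset index function induced by $G$ is $f_G(x)=h_G(C_x)$, where $C_x\in D_G$ is the coset containing $x$ and $h_G:D_G\to\mathbb{Z}_{|D_G|}$ is a fixed bijection. Definition: for finite abelian groups $A,B$, a function $f:A\to B$ is an $(n,m,\lambda)$ zero-difference balanced function (ZDBF) if $n=|A|$, $m=|f(A)|$, and for every nonzero $a\in A$, $|\{x\in A\mid f(x+a)-f(x)=0\}|=\lambda$. *)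

theory Defs
  imports Main
begin

definition ring_units :: "'a::ring_1 set" where
  "ring_units = {u. \<exists>v. u * v = 1 \<and> v * u = 1}"

definition subgroup_of_units :: "'a::ring_1 set \<Rightarrow> bool" where
  "subgroup_of_units G \<longleftrightarrow> G \<subseteq> ring_units \<and> 1 \<in> G \<and>
     (\<forall>a\<in>G. \<forall>b\<in>G. a * b \<in> G) \<and> (\<forall>a\<in>G. \<exists>b\<in>G. a * b = 1 \<and> b * a = 1)"

definition coset :: "'a::ring_1 \<Rightarrow> 'a set \<Rightarrow> 'a set" where
  "coset r G = (\<lambda>g. r * g) ` G"

definition coset_partition :: "'a::ring_1 set \<Rightarrow> 'a set set" where
  "coset_partition G = range (\<lambda>r. coset r G)"

definition coset_index_fun :: "('a set \<Rightarrow> int) \<Rightarrow> 'a::ring_1 set \<Rightarrow> 'a \<Rightarrow> int" where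
  "coset_index_fun h G x = h (coset x G)"

text \<open>(n,m,lambda) zero-difference balanced function from a finite abelian group A
  (the additive group of the finite type 'a) to Z_M, elements of Z_M represented by
  {0..<M} with subtraction modulo M.\<close>
definition zdbf_Zmod :: "('a::{finite,ab_group_add} \<Rightarrow> int) \<Rightarrow> int \<Rightarrow> nat \<Rightarrow> nat \<Rightarrow> nat \<Rightarrow> bool" where
  "zdbf_Zmod f M n m l \<longleftrightarrow> (\<forall>x. f x \<in> {0..<M}) \<and> n = card (UNIV :: 'a set) \<and> m = card (range f) \<and>
     (\<forall>a. a \<noteq> 0 \<longrightarrow> card {x. (f (x + a) - f x) mod M = 0} = l)"

end

theory Submission
  imports Defs
begin

lemma self_in_coset:
  assumes "subgroup_of_units G" shows "x \<in> coset x G"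
  using assms unfolding subgroup_of_units_def coset_def by force

lemma coset_mult:
  fixes G :: "'a::ring_1 set"
  assumes "subgroup_of_units G" "g \<in> G" shows "coset (y * g) G = coset y G"
proof
  show "coset (y * g) G \<subseteq> coset y G"
    using assms unfolding subgroup_of_units_def coset_def by (auto simp: mult.assoc)
next
  show "coset y G \<subseteq> coset (y * g) G"
  proof
    fix z assume "z \<in> coset y G"
    then obtain g' where g': "g' \<in> G" "z = y * g'" unfolding coset_def by auto
    obtain b where b: "b \<in> G" "g * b = 1" "b * g = 1"
      using assms unfolding subgroup_of_units_def by blast
    have "b * g' \<in> G" using assms b g' unfolding subgroup_of_units_def by blast
    moreover have "z = y * g * (b * g')"
      using g' b by (metis mult.assoc mult_1_left)
    ultimately show "z \<in> coset (y * g) G" unfolding coset_def by auto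
  qed
qed

lemma coset_eq:
  fixes G :: "'a::ring_1 set"
  assumes "subgroup_of_units G" "x \<in> coset y G" shows "coset x G = coset y G"
  using assms coset_mult unfolding coset_def by blast

lemma left_inj:
  fixes G :: "'a::ring_1 set"
  assumes G: "subgroup_of_units G"
    and U: "\<forall>g\<in>G. g - 1 \<noteq> 0 \<longrightarrow> g - 1 \<in> ring_units"
    and r: "r \<noteq> 0"
  shows "inj_on (\<lambda>g. r * g) G"
proof
  fix g g' assume g: "g \<in> G" "g' \<in> G" "r * g = r * g'"
  obtain b where b: "b \<in> G" "g' * b = 1" "b * g' = 1"
    using G g unfolding subgroup_of_units_def by blast
  have gb: "g * b \<in> G" using G g b unfolding subgroup_of_units_def by blast
  show "g = g'"
  proof (cases "g * b - 1 = 0")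
    case True
    then have "g * b = 1" by simp
    then have "g * b * g' = g'" by simp
    then show ?thesis using b by (simp add: mult.assoc)
  next
    case False
    then obtain v where v: "(g * b - 1) * v = 1" using U gb unfolding ring_units_def by blast
    have "r * (g * b - 1) = r * g * b - r" by (simp add: algebra_simps)
    also have "\<dots> = r * g' * b - r" using g by simp
    also have "\<dots> = 0" using b by (simp add: mult.assoc)
    finally have "r * (g * b - 1) * v = 0" by simp
    then have "r = 0" using v by (simp add: mult.assoc)
    then show ?thesis using r by simp
  qed
qed

lemma card_coset:
  fixes G :: "'a::ring_1 set"
  assumes G: "subgroup_of_units G"
    and U: "\<forall>g\<in>G. g - 1 \<noteq> 0 \<longrightarrow> g - 1 \<in> ring_units"
    and r: "r \<noteq> 0"
  shows "card (coset r G) = card G"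
  unfolding coset_def using card_image[OF left_inj[OF G U r]] .

theorem corollary2p4:
  fixes G :: "'a::{ring_1,finite} set" and h :: "'a set \<Rightarrow> int"
  assumes "subgroup_of_units G"
    and "bij_betw h (coset_partition G) {0..<int (card (coset_partition G))}"
    and "\<forall>g\<in>G. g - 1 \<noteq> 0 \<longrightarrow> g - 1 \<in> ring_units"
  shows "card G dvd (card (UNIV :: 'a set) - 1) \<and>
    zdbf_Zmod (coset_index_fun h G) (int ((card (UNIV :: 'a set) - 1) div card G + 1))
      (card (UNIV :: 'a set)) ((card (UNIV :: 'a set) - 1) div card G + 1) (card G - 1)"
proof -
  note G = assms(1) and hb = assms(2) and U = assms(3)
  define P where "P = coset_partition G"
  define P' where "P' = (\<lambda>r. coset r G) ` (UNIV - {0})"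
  define k where "k = card G"
  define n where "n = card (UNIV :: 'a set)"
  have one: "1 \<in> G" using G unfolding subgroup_of_units_def by blast
  have kpos: "k \<ge> 1"
  proof -
    have "finite G" by simp
    then have "card G > 0" using one card_gt_0_iff by blast
    then show ?thesis by (simp add: k_def)
  qed
  have c0: "coset 0 G = {0}" using one unfolding coset_def by auto
  have PP: "P = insert {0} P'"
    unfolding P_def P'_def coset_partition_def using c0 by auto
  have notin: "{0} \<notin> P'"
  proof
    assume "{0} \<in> P'"
    then obtain r where "r \<noteq> 0" "{0} = coset r G" unfolding P'_def by auto
    then show False using self_in_coset[OF G, of r] by auto
  qed
  have UP: "\<Union>P' = UNIV - {0}"
  proof
    show "\<Union>P' \<subseteq> UNIV - {0}"
    proof
      fix x assume "x \<in> \<Union>P'"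
      then obtain r where r: "r \<noteq> 0" "x \<in> coset r G" unfolding P'_def by auto
      then obtain g where g: "g \<in> G" "x = r * g" unfolding coset_def by auto
      have "x \<noteq> 0"
      proof
        assume "x = 0"
        obtain b where b: "g * b = 1" using G g unfolding subgroup_of_units_def by blast
        have "r = r * g * b" using b by (simp add: mult.assoc)
        then show False using g r \<open>x = 0\<close> by simp
      qed
      then show "x \<in> UNIV - {0}" by simp
    qed
  next
    show "UNIV - {0} \<subseteq> \<Union>P'"
      unfolding P'_def using self_in_coset[OF G] by blast
  qed
  have cardP': "k * card P' = n - 1"
  proof -
    have "k * card P' = card (\<Union>P')"
    proof (rule card_partition)
      show "card c = k" if "c \<in> P'" for c using that unfolding P'_def k_def using card_coset[OF G U] by auto
      show "c1 \<inter> c2 = {}" if "c1 \<in> P'" "c2 \<in> P'" "c1 \<noteq> c2" for c1 c2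
        using that unfolding P'_def using coset_eq[OF G] by blast
    qed auto
    also have "\<dots> = n - 1" unfolding UP n_def by (simp add: card_Diff_singleton)
    finally show ?thesis .
  qed
  have cardP: "card P = card P' + 1" using PP notin by simp
  have Mdef: "(n - 1) div k + 1 = card P" 
  proof -
    have "(n - 1) div k = card P'" using cardP' kpos by (metis nonzero_mult_div_cancel_left not_one_le_zero)
    then show ?thesis using cardP by simp
  qed
  have dv: "k dvd n - 1" using cardP' by (metis dvd_triv_left)
  have hinj: "inj_on h P" using hb unfolding P_def bij_betw_def by blast
  have hrange: "h ` P = {0..<int (card P)}" using hb unfolding P_def bij_betw_def by blast
  have inP: "coset x G \<in> P" for x unfolding P_def coset_partition_def by auto
  have frange: "range (coset_index_fun h G) = h ` P"
    unfolding coset_index_fun_def P_def coset_partition_def by auto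
  define f where "f = coset_index_fun h G"
  have fval: "f x \<in> {0..<int (card P)}" for x
    using inP[of x] hrange unfolding f_def coset_index_fun_def by blast
  have cardrange: "card (range f) = card P"
    unfolding f_def frange using card_image[OF hinj] .
  have zd: "card {x. (f (x + a) - f x) mod int (card P) = 0} = k - 1" if a: "a \<noteq> 0" for a
  proof -
    have S: "{x. (f (x + a) - f x) mod int (card P) = 0} = {x. x + a \<in> coset x G}"
    proof (rule Collect_cong)
      fix x
      have "(f (x + a) - f x) mod int (card P) = 0 \<longleftrightarrow> f (x + a) = f x"
      proof
        assume h: "(f (x + a) - f x) mod int (card P) = 0"
        have b1: "f (x + a) \<in> {0..<int (card P)}" "f x \<in> {0..<int (card P)}" using fval by auto
        have "int (card P) dvd f (x + a) - f x" using h by (simp add: dvd_eq_mod_eq_0)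
        then obtain q where q: "f (x + a) - f x = int (card P) * q" by (erule dvdE)
        have "q = 0"
        proof (rule ccontr)
          assume "q \<noteq> 0"
          then have "\<bar>int (card P) * q\<bar> \<ge> int (card P)" 
            
          proof -
            have "1 \<le> \<bar>q\<bar>" using \<open>q \<noteq> 0\<close> by linarith
            then have "int (card P) * 1 \<le> int (card P) * \<bar>q\<bar>" by (rule mult_left_mono) simp
            then show ?thesis by (simp add: abs_mult)
          qed
          moreover have "\<bar>f (x + a) - f x\<bar> < int (card P)" using b1 by (auto simp: abs_if)
          ultimately show False using q by simp
        qed
        then show "f (x + a) = f x" using q by simp
      qed simp
      also have "\<dots> \<longleftrightarrow> coset (x + a) G = coset x G"
        unfolding f_def coset_index_fun_def by (rule inj_on_eq_iff[OF hinj inP inP])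
      also have "\<dots> \<longleftrightarrow> x + a \<in> coset x G"
      proof
        assume "coset (x + a) G = coset x G"
        then show "x + a \<in> coset x G" using self_in_coset[OF G, of "x + a"] by simp
      qed (rule coset_eq[OF G])
      finally show "(f (x + a) - f x) mod int (card P) = 0 \<longleftrightarrow> x + a \<in> coset x G" .
    qed
    define w where "w g = (SOME v. (g - 1) * v = 1 \<and> v * (g - 1) = 1)" for g :: 'a
    have w: "(g - 1) * w g = 1 \<and> w g * (g - 1) = 1" if "g \<in> G - {1}" for g
    proof -
      have "g - 1 \<in> ring_units" using U that by auto
      then have "\<exists>v. (g - 1) * v = 1 \<and> v * (g - 1) = 1" unfolding ring_units_def by simp
      then show ?thesis unfolding w_def by (rule someI_ex)
    qed
    define psi where "psi g = a * w g" for g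
    have bij: "bij_betw psi (G - {1}) {x. x + a \<in> coset x G}"
    proof (rule bij_betw_imageI)
      have key: "psi g * g = psi g + a" "psi g * (g - 1) = a" if "g \<in> G - {1}" for g
      proof -
        show "psi g * (g - 1) = a" unfolding psi_def using w[OF that] by (simp add: mult.assoc)
        then show "psi g * g = psi g + a" by (simp add: algebra_simps)
      qed
      show "inj_on psi (G - {1})"
      proof
        fix g g' assume gs: "g \<in> G - {1}" "g' \<in> G - {1}" "psi g = psi g'"
        have "psi g \<noteq> 0" using key(2)[OF gs(1)] a by auto
        moreover have "psi g * g = psi g * g'" using key(1)[OF gs(1)] key(1)[OF gs(2)] gs(3) by simp
        ultimately show "g = g'" using left_inj[OF G U] gs by (auto dest: inj_onD)
      qed
      show "psi ` (G - {1}) = {x. x + a \<in> coset x G}"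
      proof
        show "psi ` (G - {1}) \<subseteq> {x. x + a \<in> coset x G}"
        proof
          fix x assume "x \<in> psi ` (G - {1})"
          then obtain g where g: "g \<in> G - {1}" "x = psi g" by blast
          then have "x + a = x * g" using key(1)[OF g(1)] by simp
          then show "x \<in> {x. x + a \<in> coset x G}" unfolding coset_def using g by auto
        qed
      next
        show "{x. x + a \<in> coset x G} \<subseteq> psi ` (G - {1})"
        proof
          fix x assume "x \<in> {x. x + a \<in> coset x G}"
          then obtain g where g: "g \<in> G" "x + a = x * g" unfolding coset_def by auto
          have g1: "g \<noteq> 1" using g a by auto
          have "x * (g - 1) = a" using g by (simp add: algebra_simps)
          moreover have "(g - 1) * w g = 1" using w[of g] g g1 by simp
          ultimately have "x = psi g" unfolding psi_def
            by (metis mult.assoc mult_1_right)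
          then show "x \<in> psi ` (G - {1})" using g g1 by auto
        qed
      qed
    qed
    have "card {x. x + a \<in> coset x G} = card (G - {1})" using bij_betw_same_card[OF bij] by simp
    also have "\<dots> = k - 1" unfolding k_def using one by simp
    finally show ?thesis using S by simp
  qed
  show ?thesis
    unfolding zdbf_Zmod_def
    using dv fval cardrange zd Mdef
    unfolding k_def n_def f_def by (simp add: P_def)
qed

end
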